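(* Let $q\geq 2$ and $N,n$ be positive integers. Then $f_{q,q-1}(N)\leq n$ if and only if $F_{q,q-1}(n)\geq N$.
   Context: $[n]=\{1,\dots,n\}$. An ordered complete graph on $N$ vertices is the complete graph on $[N]$ with its natural order; a path in it is monotone if its vertices, in traversal order, are strictly increasing; its length is its number of vertices. For a $q$-edge-colored ordered complete graph $K$ (colors in $[q]$), $f_{q,r}(K)$ is the maximum length of a monotone path in $K$ whose edges use at most $r$ colors, and $f_{q,r}(N)$ is the minimum of $f_{q,r}(K)$ over all $q$-edge-colored ordered complete graphs $K$ on $N$ vertices. For $x,y\in\mathbb{R}^q$, $x<_r y$ means there are at least $r$ coordinates $i$ with $x_i<y_i$; $F_{q,r}(n)$ is the maximum $N$ such that there exist $x_1,\dots,x_N\in[n]^q$ with $x_a<_r x_b$ for all $a<b$. *)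

theory Defs
  imports Main
begin

text \<open>A q-edge-colouring of the ordered complete graph on [N] = {1..N}: every edge {a,b}
  with a < b gets a colour c a b in [q] = {1..q}. (Only the values for a < b matter.)\<close>
definition edge_colouring :: "nat \<Rightarrow> nat \<Rightarrow> (nat \<Rightarrow> nat \<Rightarrow> nat) \<Rightarrow> bool" where
  "edge_colouring q N c \<longleftrightarrow> (\<forall>a b. 1 \<le> a \<and> a < b \<and> b \<le> N \<longrightarrow> c a b \<in> {1..q})"

text \<open>A monotone path in the ordered complete graph on [N], given by its vertex list in
  traversal order (strictly increasing, nonempty); its length is its number of vertices.\<close>
definition mono_path :: "nat \<Rightarrow> nat list \<Rightarrow> bool" where
  "mono_path N vs \<longleftrightarrow> vs \<noteq> [] \<and> sorted_wrt (<) vs \<and> set vs \<subseteq> {1..N}"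

definition path_colours :: "(nat \<Rightarrow> nat \<Rightarrow> nat) \<Rightarrow> nat list \<Rightarrow> nat set" where
  "path_colours c vs = {c (vs ! i) (vs ! (i + 1)) | i. i + 1 < length vs}"

definition f_col :: "nat \<Rightarrow> nat \<Rightarrow> (nat \<Rightarrow> nat \<Rightarrow> nat) \<Rightarrow> nat" where
  "f_col N r c = Max {length vs | vs. mono_path N vs \<and> card (path_colours c vs) \<le> r}"

definition f_qr :: "nat \<Rightarrow> nat \<Rightarrow> nat \<Rightarrow> nat" where
  "f_qr q r N = Min {f_col N r c | c. edge_colouring q N c}"

definition lt_r :: "nat \<Rightarrow> nat \<Rightarrow> (nat \<Rightarrow> nat) \<Rightarrow> (nat \<Rightarrow> nat) \<Rightarrow> bool" where
  "lt_r q r x y \<longleftrightarrow> card {i \<in> {1..q}. x i < y i} \<ge> r"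

definition F_qr :: "nat \<Rightarrow> nat \<Rightarrow> nat \<Rightarrow> nat" where
  "F_qr q r n = Max {N. \<exists>x :: nat \<Rightarrow> nat \<Rightarrow> nat.
      (\<forall>a \<in> {1..N}. \<forall>i \<in> {1..q}. x a i \<in> {1..n}) \<and>
      (\<forall>a b. 1 \<le> a \<and> a < b \<and> b \<le> N \<longrightarrow> lt_r q r (x a) (x b))}"

end

theory Submission
  imports Defs "HOL-Library.FuncSet"
begin

lemma mono_path_len: "mono_path N vs \<Longrightarrow> length vs \<le> N"
proof -
  assume m: "mono_path N vs"
  hence d: "distinct vs" and s: "set vs \<subseteq> {1..N}" by (auto simp: mono_path_def strict_sorted_iff)
  have "length vs = card (set vs)" using d by (simp add: distinct_card)
  also have "\<dots> \<le> card {1..N}" by (rule card_mono) (use s in auto)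
  finally show ?thesis by simp
qed

lemma mono_path_single: "1 \<le> a \<Longrightarrow> a \<le> N \<Longrightarrow> mono_path N [a]"
  by (simp add: mono_path_def)

lemma path_colours_single: "path_colours c [a] = {}"
  by (simp add: path_colours_def)

lemma mono_path_lt: "mono_path N vs \<Longrightarrow> k + 1 < length vs \<Longrightarrow>
   1 \<le> vs ! k \<and> vs ! k < vs ! (k+1) \<and> vs ! (k+1) \<le> N"
proof -
  assume m: "mono_path N vs" and k: "k + 1 < length vs"
  have "vs ! k < vs ! (k+1)" using m k by (auto simp: mono_path_def intro: sorted_wrt_nth_less)
  moreover have "vs ! k \<in> set vs" "vs ! (k+1) \<in> set vs" using k by auto
  ultimately show ?thesis using m by (auto simp: mono_path_def)
qed

lemma path_colours_sub: "edge_colouring q N c \<Longrightarrow> mono_path N vs \<Longrightarrow> path_colours c vs \<subseteq> {1..q}"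
  unfolding path_colours_def edge_colouring_def
  using mono_path_lt by blast

lemma mono_path_snoc: "mono_path N vs \<Longrightarrow> last vs < b \<Longrightarrow> b \<le> N \<Longrightarrow> mono_path N (vs @ [b])"
proof -
  assume m: "mono_path N vs" and l: "last vs < b" and b: "b \<le> N"
  have ne: "vs \<noteq> []" using m by (simp add: mono_path_def)
  have "sorted_wrt (<) (butlast vs @ [last vs])" using m ne by (simp add: mono_path_def)
  hence "\<forall>x\<in>set vs. x \<le> last vs" using ne
    by (metis append_butlast_last_id dual_order.order_iff_strict insert_iff list.set(2) list.simps(15) set_append sorted_wrt_append Un_iff)
  hence "\<forall>x\<in>set vs. x < b" using l by force
  moreover have "1 \<le> b" using l by simp
  ultimately show ?thesis using m b by (auto simp: mono_path_def sorted_wrt_append)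
qed

lemma path_colours_snoc: "vs \<noteq> [] \<Longrightarrow> path_colours c (vs @ [b]) = path_colours c vs \<union> {c (last vs) b}"
proof -
  assume ne: "vs \<noteq> []"
  show ?thesis
  proof (rule set_eqI, rule iffI)
    fix z assume "z \<in> path_colours c (vs @ [b])"
    then obtain i where z: "z = c ((vs@[b]) ! i) ((vs@[b]) ! (i+1))" and i: "i + 1 < length vs + 1"
      by (auto simp: path_colours_def)
    show "z \<in> path_colours c vs \<union> {c (last vs) b}"
    proof (cases "i + 1 < length vs")
      case True
      then show ?thesis using z by (auto simp: path_colours_def nth_append)
    next
      case False
      hence "i = length vs - 1" using i by simp
      then show ?thesis using z ne by (simp add: nth_append last_conv_nth)
    qed
  next
    fix z assume "z \<in> path_colours c vs \<union> {c (last vs) b}"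
    then show "z \<in> path_colours c (vs @ [b])"
    proof
      assume "z \<in> path_colours c vs"
      then obtain i where z: "z = c (vs ! i) (vs ! (i+1))" and i: "i + 1 < length vs"
        by (auto simp: path_colours_def)
      hence "z = c ((vs@[b]) ! i) ((vs@[b]) ! (i+1))" by (simp add: nth_append)
      thus ?thesis using i unfolding path_colours_def by force
    next
      assume "z \<in> {c (last vs) b}"
      hence "z = c ((vs@[b]) ! (length vs - 1)) ((vs@[b]) ! (length vs - 1 + 1))"
        using ne by (simp add: nth_append last_conv_nth)
      moreover have "length vs - 1 + 1 < length (vs @ [b])" using ne by simp
      ultimately show ?thesis unfolding path_colours_def by blast
    qed
  qed
qed

lemma f_col_set_finite: "finite {length vs | vs. mono_path N vs \<and> P vs}"
  by (rule finite_subset[of _ "{..N}"]) (auto dest: mono_path_len)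

lemma f_col_mem: "1 \<le> N \<Longrightarrow> length vs \<in> {length vs | vs. mono_path N vs \<and> card (path_colours c vs) \<le> r} \<Longrightarrow> length vs \<le> f_col N r c"
  unfolding f_col_def by (rule Max_ge[OF f_col_set_finite])

lemma f_col_ne: "1 \<le> N \<Longrightarrow> {length vs | vs. mono_path N vs \<and> card (path_colours c vs) \<le> r} \<noteq> {}"
  using mono_path_single[of 1 N] path_colours_single[of c 1] by force

lemma f_col_le: "1 \<le> N \<Longrightarrow> f_col N r c \<le> N"
  unfolding f_col_def using f_col_set_finite f_col_ne
  by (subst Max_le_iff) (auto dest: mono_path_len)

lemma F_set_bound:
  assumes q: "q \<ge> 2"
    and x: "\<forall>a \<in> {1..M}. \<forall>i \<in> {1..q}. x a i \<in> {1..n}"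
    and lt: "\<forall>a b. 1 \<le> a \<and> a < b \<and> b \<le> M \<longrightarrow> lt_r q (q-1) (x a) (x b)"
  shows "M \<le> n ^ q"
proof -
  define g where "g a = restrict (x a) {1..q}" for a
  have "inj_on g {1..M}"
  proof (rule inj_onI)
    fix a b assume a: "a \<in> {1..M}" and b: "b \<in> {1..M}" and e: "g a = g b"
    have "\<exists>i\<in>{1..q}. x a i \<noteq> x b i" if "1 \<le> a" "a < b" "b \<le> M" for a b
    proof -
      have "card {i \<in> {1..q}. x a i < x b i} \<ge> 1" using lt that q unfolding lt_r_def by force
      hence "{i \<in> {1..q}. x a i < x b i} \<noteq> {}" by (metis card.empty not_one_le_zero)
      thus ?thesis by force
    qed
    moreover have "\<forall>i\<in>{1..q}. x a i = x b i" using e unfolding g_def by (metis restrict_apply')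
    ultimately show "a = b" using a b by (metis atLeastAtMost_iff linorder_neqE_nat)
  qed
  moreover have "g ` {1..M} \<subseteq> (\<Pi>\<^sub>E i \<in> {1..q}. {1..n})" using x unfolding g_def by auto
  ultimately have "card {1..M} \<le> card (\<Pi>\<^sub>E i \<in> {1..q}. {1..n::nat})"
    by (metis card_inj_on_le finite_PiE finite_atLeastAtMost)
  thus ?thesis by (simp add: card_PiE)
qed

lemma F_set_finite:
  assumes "q \<ge> 2"
  shows "finite {N. \<exists>x :: nat \<Rightarrow> nat \<Rightarrow> nat.
      (\<forall>a \<in> {1..N}. \<forall>i \<in> {1..q}. x a i \<in> {1..n}) \<and>
      (\<forall>a b. 1 \<le> a \<and> a < b \<and> b \<le> N \<longrightarrow> lt_r q (q-1) (x a) (x b))}"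
  by (rule finite_subset[of _ "{..n^q}"]) (use F_set_bound[OF assms] in auto)

lemma dir1:
  assumes q: "q \<ge> 2" and N: "N \<ge> 1" and c: "edge_colouring q N c" and fc: "f_col N (q-1) c \<le> n"
  shows "\<exists>x :: nat \<Rightarrow> nat \<Rightarrow> nat.
      (\<forall>a \<in> {1..N}. \<forall>i \<in> {1..q}. x a i \<in> {1..n}) \<and>
      (\<forall>a b. 1 \<le> a \<and> a < b \<and> b \<le> N \<longrightarrow> lt_r q (q-1) (x a) (x b))"
proof -
  define S where "S a i = {length vs | vs. mono_path N vs \<and> (last vs = a \<and> i \<notin> path_colours c vs)}" for a i
  define x where "x a i = Max (S a i)" for a i
  have fin: "finite (S a i)" for a i unfolding S_def by (rule f_col_set_finite)
  have one: "1 \<in> S a i" if "a \<in> {1..N}" for a i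
  proof -
    have "mono_path N [a]" using that by (simp add: mono_path_single)
    hence "length [a] \<in> S a i" unfolding S_def
      by (intro CollectI exI[of _ "[a]"]) (simp add: path_colours_single)
    thus ?thesis by simp
  qed
  have wit: "\<exists>vs. mono_path N vs \<and> last vs = a \<and> i \<notin> path_colours c vs \<and> length vs = x a i"
    if "a \<in> {1..N}" for a i
  proof -
    have "x a i \<in> S a i" unfolding x_def using fin one[OF that] by (intro Max_in) auto
    thus ?thesis unfolding S_def by auto
  qed
  have bnd: "x a i \<in> {1..n}" if a: "a \<in> {1..N}" and i: "i \<in> {1..q}" for a i
  proof -
    have ge1: "1 \<le> x a i" unfolding x_def using fin one[OF a] by (rule Max_ge)
    obtain vs where vs: "mono_path N vs" "last vs = a" "i \<notin> path_colours c vs" "length vs = x a i"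
      using wit[OF a] by blast
    have "path_colours c vs \<subseteq> {1..q} - {i}" using path_colours_sub[OF c vs(1)] vs(3) by auto
    hence "card (path_colours c vs) \<le> card ({1..q} - {i})" by (intro card_mono) auto
    also have "\<dots> = q - 1" using i by simp
    finally have "length vs \<le> f_col N (q-1) c" using N vs(1) by (intro f_col_mem) auto
    thus ?thesis using ge1 vs(4) fc by auto
  qed
  have inc: "x a i < x b i" if ab: "1 \<le> a" "a < b" "b \<le> N" and i: "i \<noteq> c a b" for a b i
  proof -
    obtain vs where vs: "mono_path N vs" "last vs = a" "i \<notin> path_colours c vs" "length vs = x a i"
      using wit[of a i] ab by auto
    have ne: "vs \<noteq> []" using vs(1) by (simp add: mono_path_def)
    have "mono_path N (vs @ [b])" using mono_path_snoc[OF vs(1)] vs(2) ab by auto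
    moreover have "i \<notin> path_colours c (vs @ [b])" using path_colours_snoc[OF ne] vs(2,3) i by auto
    ultimately have "length (vs @ [b]) \<in> S b i" unfolding S_def by fastforce
    hence "length (vs @ [b]) \<le> x b i" unfolding x_def using fin by (intro Max_ge) auto
    thus ?thesis using vs(4) by simp
  qed
  have "lt_r q (q-1) (x a) (x b)" if ab: "1 \<le> a" "a < b" "b \<le> N" for a b
  proof -
    have "{1..q} - {c a b} \<subseteq> {i \<in> {1..q}. x a i < x b i}" using inc[OF ab] by auto
    hence "card ({1..q} - {c a b}) \<le> card {i \<in> {1..q}. x a i < x b i}" by (intro card_mono) auto
    moreover have "card {1..q} - card {c a b} \<le> card ({1..q} - {c a b})" by (rule diff_card_le_card_Diff) simp
    hence "card ({1..q} - {c a b}) \<ge> q - 1" by simp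
    ultimately show ?thesis unfolding lt_r_def by linarith
  qed
  thus ?thesis using bnd by blast
qed

lemma dir2:
  assumes q: "q \<ge> 2" and N: "N \<ge> 1"
    and xb: "\<forall>a \<in> {1..N}. \<forall>i \<in> {1..q}. x a i \<in> {1..n}"
    and lt: "\<forall>a b. 1 \<le> a \<and> a < b \<and> b \<le> N \<longrightarrow> lt_r q (q-1) (x a) (x b)"
  shows "\<exists>c. edge_colouring q N c \<and> f_col N (q-1) c \<le> n"
proof -
  have uniq: "i = j" if ab: "1 \<le> a" "a < b" "b \<le> N" and i: "i \<in> {1..q}" "x b i \<le> x a i"
    and j: "j \<in> {1..q}" "x b j \<le> x a j" for a b i j
  proof (rule ccontr)
    assume ne: "i \<noteq> j"
    have "{l \<in> {1..q}. x a l < x b l} \<subseteq> {1..q} - {i, j}" using i j by auto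
    hence "card {l \<in> {1..q}. x a l < x b l} \<le> card ({1..q} - {i, j})" by (intro card_mono) auto
    also have "\<dots> = q - 2" using i j ne by (simp add: card_Diff_subset)
    finally show False using lt ab q unfolding lt_r_def by force
  qed
  define c where "c a b = (if \<exists>i\<in>{1..q}. x b i \<le> x a i then SOME i. i\<in>{1..q} \<and> x b i \<le> x a i else 1)" for a b
  have cq: "c a b \<in> {1..q}" for a b
  proof (cases "\<exists>i\<in>{1..q}. x b i \<le> x a i")
    case True
    have "(SOME i. i\<in>{1..q} \<and> x b i \<le> x a i) \<in> {1..q}"
      by (rule conjunct1[OF someI_ex]) (use True in blast)
    then show ?thesis by (simp only: c_def if_P[OF True])
  next
    case False
    then show ?thesis unfolding c_def using q by auto
  qed
  have col: "edge_colouring q N c" unfolding edge_colouring_def using cq by blast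
  have step: "x a i < x b i" if ab: "1 \<le> a" "a < b" "b \<le> N" and i: "i \<in> {1..q}" "i \<noteq> c a b" for a b i
  proof (rule ccontr)
    assume "\<not> x a i < x b i"
    hence le: "x b i \<le> x a i" by simp
    hence ex: "\<exists>i\<in>{1..q}. x b i \<le> x a i" using i by blast
    have "(SOME i. i\<in>{1..q} \<and> x b i \<le> x a i) \<in> {1..q} \<and> x b (SOME i. i\<in>{1..q} \<and> x b i \<le> x a i) \<le> x a (SOME i. i\<in>{1..q} \<and> x b i \<le> x a i)"
      by (rule someI_ex) (use ex in blast)
    hence "c a b \<in> {1..q} \<and> x b (c a b) \<le> x a (c a b)" by (simp only: c_def if_P[OF ex])
    hence "i = c a b" using uniq[OF ab i(1) le] by blast
    thus False using i by simp
  qed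
  have "f_col N (q-1) c \<le> n" unfolding f_col_def
  proof (subst Max_le_iff[OF f_col_set_finite f_col_ne[OF N]], safe)
    fix vs assume m: "mono_path N vs" and cd: "card (path_colours c vs) \<le> q - 1"
    have sub: "path_colours c vs \<subseteq> {1..q}" by (rule path_colours_sub[OF col m])
    have "\<not> {1..q} \<subseteq> path_colours c vs"
    proof
      assume "{1..q} \<subseteq> path_colours c vs"
      hence "card {1..q} \<le> card (path_colours c vs)" by (intro card_mono) (auto intro: finite_subset[OF sub])
      thus False using cd q by simp
    qed
    then obtain i where i: "i \<in> {1..q}" "i \<notin> path_colours c vs" by blast
    have inc: "x (vs ! k) i < x (vs ! (k+1)) i" if k: "k + 1 < length vs" for k
    proof -
      have "c (vs ! k) (vs ! (k+1)) \<in> path_colours c vs" using k unfolding path_colours_def by blast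
      hence "i \<noteq> c (vs ! k) (vs ! (k+1))" using i by auto
      thus ?thesis using step mono_path_lt[OF m k] i by blast
    qed
    have grow: "k < length vs \<Longrightarrow> k + 1 \<le> x (vs ! k) i" for k
    proof (induction k)
      case 0
      have "vs ! 0 \<in> set vs" using 0 by simp
      hence "vs ! 0 \<in> {1..N}" using m unfolding mono_path_def by blast
      then show ?case using xb i by auto
    next
      case (Suc k)
      then show ?case using inc[of k] by simp
    qed
    have ne: "vs \<noteq> []" using m by (simp add: mono_path_def)
    hence l: "length vs - 1 < length vs" by simp
    have "vs ! (length vs - 1) \<in> set vs" using l by (rule nth_mem)
    hence "vs ! (length vs - 1) \<in> {1..N}" using m unfolding mono_path_def by blast
    hence "x (vs ! (length vs - 1)) i \<le> n" using xb i by auto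
    thus "length vs \<le> n" using grow[OF l] ne by simp
  qed
  thus ?thesis using col by blast
qed

theorem proposition3p1:
  fixes q N n :: nat
  assumes "q \<ge> 2" and "N \<ge> 1" and "n \<ge> 1"
  shows "f_qr q (q - 1) N \<le> n \<longleftrightarrow> F_qr q (q - 1) n \<ge> N"
proof -
  let ?T = "{f_col N (q-1) c | c. edge_colouring q N c}"
  let ?S = "{N. \<exists>x :: nat \<Rightarrow> nat \<Rightarrow> nat.
      (\<forall>a \<in> {1..N}. \<forall>i \<in> {1..q}. x a i \<in> {1..n}) \<and>
      (\<forall>a b. 1 \<le> a \<and> a < b \<and> b \<le> N \<longrightarrow> lt_r q (q-1) (x a) (x b))}"
  have Tfin: "finite ?T"
    by (rule finite_subset[of _ "{..N}"]) (use f_col_le[OF assms(2)] in auto)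
  have col1: "edge_colouring q N (\<lambda>_ _. 1)" using assms(1) by (simp add: edge_colouring_def)
  hence Tne: "?T \<noteq> {}" by blast
  have Sfin: "finite ?S" by (rule F_set_finite[OF assms(1)])
  have "0 \<in> ?S" by auto
  hence Sne: "?S \<noteq> {}" by blast
  show ?thesis
  proof
    assume h: "f_qr q (q - 1) N \<le> n"
    have "f_qr q (q - 1) N \<in> ?T" unfolding f_qr_def using Tfin Tne by (rule Min_in)
    then obtain c where c: "edge_colouring q N c" "f_col N (q-1) c \<le> n" using h by auto
    have "N \<in> ?S" using dir1[OF assms(1,2) c] by blast
    thus "N \<le> F_qr q (q - 1) n" unfolding F_qr_def using Sfin by (intro Max_ge)
  next
    assume h: "N \<le> F_qr q (q - 1) n"
    have "F_qr q (q - 1) n \<in> ?S" unfolding F_qr_def using Sfin Sne by (rule Max_in)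
    then obtain x where x: "\<forall>a \<in> {1..F_qr q (q - 1) n}. \<forall>i \<in> {1..q}. x a i \<in> {1..n}"
      "\<forall>a b. 1 \<le> a \<and> a < b \<and> b \<le> F_qr q (q - 1) n \<longrightarrow> lt_r q (q-1) (x a) (x b)" by blast
    have x1: "\<forall>a \<in> {1..N}. \<forall>i \<in> {1..q}. x a i \<in> {1..n}" using x(1) h by auto
    have x2: "\<forall>a b. 1 \<le> a \<and> a < b \<and> b \<le> N \<longrightarrow> lt_r q (q-1) (x a) (x b)" using x(2) h by auto
    obtain c where c: "edge_colouring q N c" "f_col N (q-1) c \<le> n" using dir2[OF assms(1,2) x1 x2] by blast
    have "f_col N (q-1) c \<in> ?T" using c(1) by blast
    hence "f_qr q (q - 1) N \<le> f_col N (q-1) c" unfolding f_qr_def using Tfin by (intro Min_le) auto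
    thus "f_qr q (q - 1) N \<le> n" using c(2) by simp
  qed
qed

end
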